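(* Let $(X,d,\mu)$ be a proper metric measure space whose measure $\mu$ is continuous with respect to $d$. Let $1<p<\infty$, and let $\rho=\{\rho_x\}_{x\in X}$ be a family of norms on $\mathbb{C}^d$ such that for every $x\in X$ there is a positive-definite self-adjoint matrix $W_x$ with $\rho_x(\mathbf{v})\le|W_x\mathbf{v}|\le d^{1/2}\rho_x(\mathbf{v})$ for all $\mathbf{v}\in\mathbb{C}^d$, where $x\mapsto W_x$ is an invertible matrix weight on $X$ and $\|W_x\|_{op}^p,\ \|W_x^{-1}\|_{op}^{p'}\in L^1_{\rm loc}(X,d,\mu)$, $p'=p/(p-1)$. A subset $\mathcal{F}\subset L^p(\rho,\mu)$ is totally bounded if: (a) $\sup_{\mathbf{f}\in\mathcal{F}}\|\mathbf{f}\|_{L^p(\rho,\mu)}<\infty$; (b) for some $x_0\in X$, $\lim_{R\to\infty}\sup_{\mathbf{f}\in\mathcal{F}}\|\mathbf{f}\chi_{X\setminus B(x_0,R)}\|_{L^p(\rho,\mu)}=0$; (c) $\lim_{r\to0}\sup_{\mathbf{f}\in\mathcal{F}}\|S_r\mathbf{f}-\mathbf{f}\|_{L^p(\rho,\mu)}=0$, where $S_r\mathbf{f}(x):=\frac{1}{\mu[B(x,r)]}\int_{B(x,r)}\mathbf{f}(y)\,d\mu(y)$.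
   Context: $(X,d,\mu)$: metric space with a positive Borel regular measure $\mu$ such that every nonempty open set has positive measure and every bounded set has finite measure; $B(x,r)=\{y:d(x,y)<r\}$. Proper: every closed bounded set is compact. $\mu$ is continuous with respect to $d$ if for all $x\in X$, $r>0$, $\lim_{y\to x}\mu[B(x,r)\Delta B(y,r)]=0$. A matrix weight on $X$ is a $\mu$-measurable map $W:X\to\mathcal{S}_d$ (self-adjoint non-negative-definite complex $d\times d$ matrices) with $\|W\|_{op}\in L^1_{\rm loc}(X,d,\mu)$; invertible means $\det W(x)\neq0$ $\mu$-a.e. It is assumed that $x\mapsto\rho_x(\mathbf{f}(x))$ is $\mu$-measurable for all $\mu$-measurable $\mathbf{f}$. $L^p(\rho,\mu)$ consists of $\mu$-measurable $\mathbf{f}:X\to\mathbb{C}^d$ with $\|\mathbf{f}\|^p_{L^p(\rho,\mu)}:=\int_X[\rho_x(\mathbf{f}(x))]^pd\mu(x)<\infty$. *)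

theory Defs
  imports "HOL-Analysis.Analysis"
begin

definition adjointM :: "complex^'n^'n \<Rightarrow> complex^'n^'n" where
  "adjointM A = (\<chi> i j. cnj (A $ j $ i))"

definition cinner :: "complex^'n \<Rightarrow> complex^'n \<Rightarrow> complex" where
  "cinner v w = (\<Sum>i\<in>UNIV. cnj (v $ i) * w $ i)"

definition self_adjoint :: "complex^'n^'n \<Rightarrow> bool" where
  "self_adjoint A \<longleftrightarrow> adjointM A = A"

definition pos_semidef :: "complex^'n^'n \<Rightarrow> bool" where
  "pos_semidef A \<longleftrightarrow> (\<forall>v. 0 \<le> Re (cinner v (A *v v)))"

definition pos_def :: "complex^'n^'n \<Rightarrow> bool" where
  "pos_def A \<longleftrightarrow> (\<forall>v. v \<noteq> 0 \<longrightarrow> 0 < Re (cinner v (A *v v)))"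

definition opnorm :: "complex^'n^'n \<Rightarrow> real" where
  "opnorm A = onorm (\<lambda>v. A *v v)"

definition is_cnorm :: "(complex^'n \<Rightarrow> real) \<Rightarrow> bool" where
  "is_cnorm N \<longleftrightarrow> (\<forall>v. 0 \<le> N v) \<and> (\<forall>v. N v = 0 \<longleftrightarrow> v = 0)
     \<and> (\<forall>c v. N (c *s v) = cmod c * N v) \<and> (\<forall>v w. N (v + w) \<le> N v + N w)"

text \<open>Local integrability: integrable on every ball (equivalently, on every bounded set).\<close>
definition loc_integrable :: "'a::metric_space measure \<Rightarrow> ('a \<Rightarrow> real) \<Rightarrow> bool" where
  "loc_integrable M g \<longleftrightarrow> g \<in> borel_measurable M \<and> (\<forall>x r. set_integrable M (ball x r) g)"

definition matrix_weight :: "'a::metric_space measure \<Rightarrow> ('a \<Rightarrow> complex^'n^'n) \<Rightarrow> bool" where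
  "matrix_weight M W \<longleftrightarrow> W \<in> borel_measurable M
     \<and> (\<forall>x. self_adjoint (W x) \<and> pos_semidef (W x))
     \<and> loc_integrable M (\<lambda>x. opnorm (W x))"

definition invertible_matrix_weight :: "'a::metric_space measure \<Rightarrow> ('a \<Rightarrow> complex^'n^'n) \<Rightarrow> bool" where
  "invertible_matrix_weight M W \<longleftrightarrow> matrix_weight M W \<and> (AE x in M. det (W x) \<noteq> 0)"

definition Lp_int :: "('a \<Rightarrow> complex^'n \<Rightarrow> real) \<Rightarrow> real \<Rightarrow> 'a measure \<Rightarrow> ('a \<Rightarrow> complex^'n) \<Rightarrow> ennreal" where
  "Lp_int \<rho> p M f = (\<integral>\<^sup>+x. ennreal ((\<rho> x (f x)) powr p) \<partial>M)"

definition Lp_norm :: "('a \<Rightarrow> complex^'n \<Rightarrow> real) \<Rightarrow> real \<Rightarrow> 'a measure \<Rightarrow> ('a \<Rightarrow> complex^'n) \<Rightarrow> ennreal" where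
  "Lp_norm \<rho> p M f = (if Lp_int \<rho> p M f = \<infinity> then \<infinity>
                       else ennreal ((enn2real (Lp_int \<rho> p M f)) powr (1 / p)))"

definition Lp_space :: "('a \<Rightarrow> complex^'n \<Rightarrow> real) \<Rightarrow> real \<Rightarrow> 'a measure \<Rightarrow> ('a \<Rightarrow> complex^'n) set" where
  "Lp_space \<rho> p M = {f. f \<in> borel_measurable M \<and> Lp_int \<rho> p M f < \<infinity>}"

definition Lp_totally_bounded :: "('a \<Rightarrow> complex^'n \<Rightarrow> real) \<Rightarrow> real \<Rightarrow> 'a measure \<Rightarrow> ('a \<Rightarrow> complex^'n) set \<Rightarrow> bool" where
  "Lp_totally_bounded \<rho> p M F \<longleftrightarrow>
     (\<forall>e>0. \<exists>K. finite K \<and> K \<subseteq> F \<and>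
        (\<forall>f\<in>F. \<exists>g\<in>K. Lp_norm \<rho> p M (\<lambda>x. f x - g x) < ennreal e))"

definition avg_op :: "'a::metric_space measure \<Rightarrow> real \<Rightarrow> ('a \<Rightarrow> complex^'n) \<Rightarrow> 'a \<Rightarrow> complex^'n" where
  "avg_op M r f x = (1 / measure M (ball x r)) *\<^sub>R (LINT y:ball x r|M. f y)"

end

theory Submission
  imports Defs
begin

locale KR =
  fixes M :: "'a::metric_space measure"
    and \<rho> :: "'a \<Rightarrow> complex^'n \<Rightarrow> real"
    and W :: "'a \<Rightarrow> complex^'n^'n"
    and p :: real
  assumes borel: "sets M = sets borel"
    and open_pos: "\<And>U. open U \<Longrightarrow> U \<noteq> {} \<Longrightarrow> emeasure M U > 0"
    and bdd_fin: "\<And>S. bounded S \<Longrightarrow> emeasure M S < \<infinity>"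
    and mu_cont: "\<And>x r. r > 0 \<Longrightarrow>
        ((\<lambda>y. measure M ((ball x r - ball y r) \<union> (ball y r - ball x r))) \<longlongrightarrow> 0) (at x)"
    and p: "1 < p"
    and norms: "\<And>x. is_cnorm (\<rho> x)"
    and W_equiv: "\<And>x v. \<rho> x v \<le> norm (W x *v v) \<and> norm (W x *v v) \<le> sqrt (real CARD('n)) * \<rho> x v"
    and W_inv_p': "loc_integrable M (\<lambda>x. (opnorm (matrix_inv (W x))) powr (p / (p - 1)))"
    and rho_meas: "\<And>f. f \<in> borel_measurable M \<Longrightarrow> (\<lambda>x. \<rho> x (f x)) \<in> borel_measurable M"
begin

definition "q = p / (p - 1)"
definition "w x = opnorm (matrix_inv (W x))"
definition "dd = sqrt (real CARD('n))"
definition "IW B = (\<integral>\<^sup>+x. indicator B x * ennreal (w x powr q) \<partial>M)"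

lemma space_M: "space M = UNIV"
  using sets_eq_imp_space_eq[OF borel] by simp

lemma meas_eq: "borel_measurable M = borel_measurable borel"
  by (rule measurable_cong_sets[OF borel refl])

lemma sets_open[intro]: "open U \<Longrightarrow> U \<in> sets M"
  using borel by auto

lemma q_gt1: "q > 1" and pq: "1/p + 1/q = 1"
  using p by (auto simp: q_def field_simps)

lemma dd_pos: "dd > 0" by (simp add: dd_def)

lemma rho_nonneg: "\<rho> x v \<ge> 0" using norms[of x] by (simp add: is_cnorm_def)
lemma rho_zero: "\<rho> x v = 0 \<longleftrightarrow> v = 0" using norms[of x] by (simp add: is_cnorm_def)
lemma rho_smult: "\<rho> x (c *s v) = cmod c * \<rho> x v" using norms[of x] by (simp add: is_cnorm_def)
lemma rho_add: "\<rho> x (v + u) \<le> \<rho> x v + \<rho> x u" using norms[of x] by (simp add: is_cnorm_def)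
lemma rho_minus: "\<rho> x (- v) = \<rho> x v"
proof -
  have e: "- v = (-1) *s v" by (simp add: vec_eq_iff)
  have "\<rho> x ((-1) *s v) = \<rho> x v" using rho_smult[of x "-1" v] by simp
  then show ?thesis by (simp only: e)
qed
lemma rho_diff: "\<rho> x (v - u) \<le> \<rho> x v + \<rho> x u"
  using rho_add[of x v "- u"] rho_minus[of x u] by simp

lemma opnorm_bound: "norm (A *v v) \<le> opnorm A * norm v"
  unfolding opnorm_def by (rule onorm) simp

lemma opnorm_nonneg: "opnorm A \<ge> 0"
  unfolding opnorm_def by (rule onorm_pos_le) simp

lemma w_nonneg: "w x \<ge> 0" by (simp add: w_def opnorm_nonneg)

lemma W_inv: "matrix_inv (W x) ** W x = mat 1"
proof -
  have "\<forall>v. W x *v v = 0 \<longrightarrow> v = 0"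
    using W_equiv rho_nonneg rho_zero by (metis antisym norm_zero)
  then have "\<exists>B. B ** W x = mat 1" using matrix_left_invertible_ker by blast
  then have "invertible (W x)" using invertible_left_inverse by blast
  then show ?thesis unfolding invertible_def matrix_inv_def
    by (metis (mono_tags, lifting) someI_ex)
qed

lemma norm_le: "norm v \<le> dd * w x * \<rho> x v"
proof -
  have "norm v = norm (matrix_inv (W x) *v (W x *v v))"
    by (simp add: matrix_vector_mul_assoc W_inv)
  also have "\<dots> \<le> w x * norm (W x *v v)" unfolding w_def by (rule opnorm_bound)
  also have "\<dots> \<le> w x * (dd * \<rho> x v)"
    using W_equiv[of x v] w_nonneg[of x] by (simp add: dd_def mult_left_mono)
  finally show ?thesis by (simp add: mult_ac)
qed

lemma rho_le_W: "\<rho> x v \<le> opnorm (W x) * norm v"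
  using W_equiv[of x v] opnorm_bound[of "W x" v] by linarith

lemma young: assumes "a \<ge> 0" "b \<ge> 0" "t > 0"
  shows "a * b \<le> t powr (-q) * a powr q + t powr p * b powr p"
proof -
  have "(a/t) * (t*b) \<le> (a/t) powr q / q + (t*b) powr p / p"
    using Youngs_inequality[of q p "a/t" "t*b"] q_gt1 p pq assms by (simp add: add.commute)
  also have "\<dots> \<le> (a/t) powr q + (t*b) powr p"
    using q_gt1 p by (intro add_mono) (auto simp: divide_le_eq_1 intro!: divide_left_mono[where b=1, simplified])
  also have "(a/t) powr q = t powr (-q) * a powr q"
  proof -
    have "(a/t) powr q = a powr q / t powr q" using assms by (simp add: powr_divide)
    then show ?thesis by (simp add: powr_minus divide_inverse)
  qed
  also have "(t*b) powr p = t powr p * b powr p"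
    using assms by (simp add: powr_mult)
  finally show ?thesis using assms by simp
qed

lemma meas_wq[measurable]: "(\<lambda>x. w x powr q) \<in> borel_measurable M"
  using W_inv_p' by (simp add: loc_integrable_def w_def q_def)

lemma meas_rho_p[measurable]:
  assumes "h \<in> borel_measurable M" shows "(\<lambda>x. ennreal (\<rho> x (h x) powr p)) \<in> borel_measurable M"
proof -
  have [measurable]: "(\<lambda>x. \<rho> x (h x)) \<in> borel_measurable M" using rho_meas[OF assms] .
  show ?thesis by measurable
qed

lemma IW_ball_fin: "IW (ball z s) < \<infinity>"
proof -
  have "set_integrable M (ball z s) (\<lambda>x. w x powr q)"
    using W_inv_p' by (simp add: loc_integrable_def w_def q_def)
  then have "(\<integral>\<^sup>+x. ennreal (norm (indicator (ball z s) x *\<^sub>R w x powr q)) \<partial>M) < \<infinity>"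
    unfolding set_integrable_def integrable_iff_bounded by simp
  moreover have "(\<integral>\<^sup>+x. ennreal (norm (indicator (ball z s) x *\<^sub>R w x powr q)) \<partial>M) = IW (ball z s)"
    unfolding IW_def by (intro nn_integral_cong) (simp add: indicator_mult_ennreal split: split_indicator)
  ultimately show ?thesis by simp
qed

lemma IW_mono: "B \<subseteq> C \<Longrightarrow> IW B \<le> IW C"
  unfolding IW_def by (intro nn_integral_mono) (auto split: split_indicator)

lemma int_bound:
  assumes h[measurable]: "h \<in> borel_measurable M" and S[measurable]: "S \<in> sets M" and t: "t > 0"
  shows "(\<integral>\<^sup>+x. indicator S x * ennreal (norm (h x)) \<partial>M)
     \<le> ennreal dd * (ennreal (t powr (-q)) * IW S + ennreal (t powr p) * Lp_int \<rho> p M h)"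
proof -
  have pt: "indicator S x * ennreal (norm (h x)) \<le> ennreal dd * (ennreal (t powr (-q)) * (indicator S x * ennreal (w x powr q)) + ennreal (t powr p) * ennreal (\<rho> x (h x) powr p))" for x
  proof (cases "x \<in> S")
    case True
    have "norm (h x) \<le> dd * (w x * \<rho> x (h x))" using norm_le[of "h x" x] by (simp add: mult_ac)
    also have "\<dots> \<le> dd * (t powr (-q) * w x powr q + t powr p * \<rho> x (h x) powr p)"
      using young[OF w_nonneg rho_nonneg t] dd_pos by (intro mult_left_mono) auto
    finally have le: "ennreal (norm (h x)) \<le> ennreal (dd * (t powr (-q) * w x powr q + t powr p * \<rho> x (h x) powr p))"
      by (rule ennreal_leI)
    have "ennreal (dd * (t powr (-q) * w x powr q + t powr p * \<rho> x (h x) powr p))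
       = ennreal dd * (ennreal (t powr (-q)) * ennreal (w x powr q) + ennreal (t powr p) * ennreal (\<rho> x (h x) powr p))"
      using dd_pos by (simp add: ennreal_mult ennreal_plus)
    then show ?thesis using le True by simp
  qed simp
  have "(\<integral>\<^sup>+x. indicator S x * ennreal (norm (h x)) \<partial>M)
     \<le> (\<integral>\<^sup>+x. ennreal dd * (ennreal (t powr (-q)) * (indicator S x * ennreal (w x powr q)) + ennreal (t powr p) * ennreal (\<rho> x (h x) powr p)) \<partial>M)"
    by (intro nn_integral_mono pt)
  also have "\<dots> = ennreal dd * (ennreal (t powr (-q)) * IW S + ennreal (t powr p) * Lp_int \<rho> p M h)"
  proof -
    have m1: "(\<lambda>x. indicator S x * ennreal (w x powr q)) \<in> borel_measurable M" by measurable
    have m2: "(\<lambda>x. ennreal (\<rho> x (h x) powr p)) \<in> borel_measurable M" by measurable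
    have m1': "(\<lambda>x. ennreal (t powr (-q)) * (indicator S x * ennreal (w x powr q))) \<in> borel_measurable M"
      using m1 by measurable
    have m2': "(\<lambda>x. ennreal (t powr p) * ennreal (\<rho> x (h x) powr p)) \<in> borel_measurable M"
      using m2 by measurable
    have "(\<integral>\<^sup>+x. ennreal dd * (ennreal (t powr (-q)) * (indicator S x * ennreal (w x powr q)) + ennreal (t powr p) * ennreal (\<rho> x (h x) powr p)) \<partial>M)
      = ennreal dd * (\<integral>\<^sup>+x. (ennreal (t powr (-q)) * (indicator S x * ennreal (w x powr q)) + ennreal (t powr p) * ennreal (\<rho> x (h x) powr p)) \<partial>M)"
      by (rule nn_integral_cmult) (use m1' m2' in measurable)
    also have "\<dots> = ennreal dd * ((\<integral>\<^sup>+x. ennreal (t powr (-q)) * (indicator S x * ennreal (w x powr q)) \<partial>M) + (\<integral>\<^sup>+x. ennreal (t powr p) * ennreal (\<rho> x (h x) powr p) \<partial>M))"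
      by (subst nn_integral_add[OF m1' m2']) (rule refl)
    also have "\<dots> = ennreal dd * (ennreal (t powr (-q)) * IW S + ennreal (t powr p) * Lp_int \<rho> p M h)"
      unfolding IW_def Lp_int_def by (simp only: nn_integral_cmult[OF m1] nn_integral_cmult[OF m2])
    finally show ?thesis .
  qed
  finally show ?thesis .
qed

lemma loc_int:
  assumes h[measurable]: "h \<in> borel_measurable M" and fin: "Lp_int \<rho> p M h < \<infinity>"
    and B: "IW S < \<infinity>" and S[measurable]: "S \<in> sets M"
  shows "set_integrable M S h"
proof -
  have "(\<integral>\<^sup>+x. ennreal (norm (indicator S x *\<^sub>R h x)) \<partial>M) = (\<integral>\<^sup>+x. indicator S x * ennreal (norm (h x)) \<partial>M)"
    by (intro nn_integral_cong) (simp split: split_indicator)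
  also have "\<dots> \<le> ennreal dd * (ennreal (1 powr (-q)) * IW S + ennreal (1 powr p) * Lp_int \<rho> p M h)"
    by (rule int_bound) auto
  also have "\<dots> < \<infinity>" using fin B by (simp add: ennreal_mult_less_top)
  finally show ?thesis unfolding set_integrable_def integrable_iff_bounded by simp
qed

lemma set_int_norm:
  assumes "set_integrable M S h"
  shows "ennreal (norm (LINT y:S|M. h y)) \<le> (\<integral>\<^sup>+x. indicator S x * ennreal (norm (h x)) \<partial>M)"
proof -
  have "ennreal (norm (LINT y:S|M. h y)) \<le> (\<integral>\<^sup>+x. ennreal (norm (indicator S x *\<^sub>R h x)) \<partial>M)"
    unfolding set_lebesgue_integral_def using assms unfolding set_integrable_def
    by (rule integral_norm_bound_ennreal)
  also have "\<dots> = (\<integral>\<^sup>+x. indicator S x * ennreal (norm (h x)) \<partial>M)"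
    by (intro nn_integral_cong) (simp split: split_indicator)
  finally show ?thesis .
qed

lemma set_int_diff_norm:
  assumes "set_integrable M S h" "set_integrable M T h"
  shows "ennreal (norm ((LINT y:S|M. h y) - (LINT y:T|M. h y)))
     \<le> (\<integral>\<^sup>+x. indicator ((S - T) \<union> (T - S)) x * ennreal (norm (h x)) \<partial>M)"
proof -
  have "(LINT y:S|M. h y) - (LINT y:T|M. h y) = integral\<^sup>L M (\<lambda>x. indicator S x *\<^sub>R h x - indicator T x *\<^sub>R h x)"
    using assms unfolding set_lebesgue_integral_def set_integrable_def by (simp add: Bochner_Integration.integral_diff)
  moreover have "ennreal (norm (integral\<^sup>L M (\<lambda>x. indicator S x *\<^sub>R h x - indicator T x *\<^sub>R h x)))
      \<le> (\<integral>\<^sup>+x. ennreal (norm (indicator S x *\<^sub>R h x - indicator T x *\<^sub>R h x)) \<partial>M)"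
    using assms unfolding set_integrable_def
    by (intro integral_norm_bound_ennreal Bochner_Integration.integrable_diff)
  ultimately have "ennreal (norm ((LINT y:S|M. h y) - (LINT y:T|M. h y)))
      \<le> (\<integral>\<^sup>+x. ennreal (norm (indicator S x *\<^sub>R h x - indicator T x *\<^sub>R h x)) \<partial>M)"
    by simp
  also have "\<dots> = (\<integral>\<^sup>+x. indicator ((S - T) \<union> (T - S)) x * ennreal (norm (h x)) \<partial>M)"
    by (intro nn_integral_cong) (simp split: split_indicator)
  finally show ?thesis .
qed

lemma fmeas: "bounded S \<Longrightarrow> S \<in> sets M \<Longrightarrow> S \<in> fmeasurable M"
  using bdd_fin by (auto intro: fmeasurableI)

lemma ball_fmeas: "ball x r \<in> fmeasurable M"
  by (rule fmeas) auto

lemma m_pos: "r > 0 \<Longrightarrow> measure M (ball x r) > 0"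
  using open_pos[of "ball x r"] bdd_fin[of "ball x r"]
  by (auto simp: measure_def enn2real_positive_iff)

lemma m_diff: "measure M (ball x r) \<le> measure M (ball y r) + measure M ((ball x r - ball y r) \<union> (ball y r - ball x r))"
proof -
  let ?D = "(ball x r - ball y r) \<union> (ball y r - ball x r)"
  have Df: "?D \<in> fmeasurable M" by (rule fmeas) (auto simp: borel intro: bounded_subset[OF bounded_ball])
  have "measure M (ball x r) \<le> measure M (ball y r \<union> ?D)"
    by (rule measure_mono_fmeasurable) (auto simp: borel intro!: fmeas intro: bounded_subset[OF bounded_ball])
  also have "\<dots> \<le> measure M (ball y r) + measure M ?D"
    using Df ball_fmeas[of y r] by (intro measure_subadditive) (auto simp: fmeasurableD2)
  finally show ?thesis .
qed

lemma m_cont: assumes "r > 0" shows "((\<lambda>y. measure M (ball y r)) \<longlongrightarrow> measure M (ball x r)) (at x)"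
proof -
  have "((\<lambda>y. measure M (ball y r) - measure M (ball x r)) \<longlongrightarrow> 0) (at x)"
  proof (rule Lim_null_comparison)
    show "((\<lambda>y. measure M ((ball x r - ball y r) \<union> (ball y r - ball x r))) \<longlongrightarrow> 0) (at x)"
      using mu_cont[OF assms] .
    show "\<forall>\<^sub>F y in at x. norm (measure M (ball y r) - measure M (ball x r)) \<le> measure M ((ball x r - ball y r) \<union> (ball y r - ball x r))"
    proof (intro always_eventually allI)
      fix y
      have "(ball y r - ball x r) \<union> (ball x r - ball y r) = (ball x r - ball y r) \<union> (ball y r - ball x r)" by blast
      then show "norm (measure M (ball y r) - measure M (ball x r)) \<le> measure M ((ball x r - ball y r) \<union> (ball y r - ball x r))"
        using m_diff[of x r y] m_diff[of y r x] by auto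
    qed
  qed
  then show ?thesis by (simp add: LIM_zero_iff)
qed

lemma AC:
  assumes B[measurable]: "B \<in> sets M" and fin: "IW B < \<infinity>" and e: "e > 0"
  shows "\<exists>\<delta>>0. \<forall>A\<in>sets M. A \<subseteq> B \<longrightarrow> emeasure M A < ennreal \<delta> \<longrightarrow> IW A < ennreal e"
proof -
  define u where "u i x = indicator B x * ennreal (max (w x powr q - real i) 0)" for i :: nat and x
  have um[measurable]: "u i \<in> borel_measurable M" for i unfolding u_def by measurable
  have "(\<lambda>i. \<integral>\<^sup>+x. u i x \<partial>M) \<longlonglongrightarrow> (\<integral>\<^sup>+x. 0 \<partial>M)"
  proof (rule nn_integral_dominated_convergence[where w="\<lambda>x. indicator B x * ennreal (w x powr q)"])
    show "(\<lambda>x. indicator B x * ennreal (w x powr q)) \<in> borel_measurable M" by measurable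
    show "(\<integral>\<^sup>+x. indicator B x * ennreal (w x powr q) \<partial>M) < \<infinity>" using fin by (simp add: IW_def)
    show "AE x in M. u j x \<le> indicator B x * ennreal (w x powr q)" for j
      by (intro AE_I2) (auto simp: u_def split: split_indicator intro!: ennreal_leI)
    show "AE x in M. (\<lambda>i. u i x) \<longlonglongrightarrow> 0"
    proof (intro AE_I2 tendsto_eventually)
      fix x
      obtain N :: nat where "w x powr q \<le> real N" using real_arch_simple by blast
      then show "\<forall>\<^sub>F i in sequentially. u i x = 0"
        unfolding u_def eventually_sequentially by (intro exI[of _ N]) auto
    qed
  qed auto
  then have "eventually (\<lambda>i. (\<integral>\<^sup>+x. u i x \<partial>M) < ennreal (e/2)) sequentially"
    using e by (intro order_tendstoD(2)) auto
  then obtain i where i: "(\<integral>\<^sup>+x. u i x \<partial>M) < ennreal (e/2)"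
    using eventually_sequentially by auto
  define \<delta> where "\<delta> = e / (2 * (real i + 1))"
  have dpos: "\<delta> > 0" using e by (simp add: \<delta>_def)
  have idle: "real i * \<delta> \<le> e / 2" using e by (simp add: \<delta>_def field_simps)
  show ?thesis
  proof (intro exI[of _ \<delta>] conjI dpos ballI impI)
    fix A assume A[measurable]: "A \<in> sets M" and AB: "A \<subseteq> B" and Am: "emeasure M A < ennreal \<delta>"
    have "IW A \<le> (\<integral>\<^sup>+x. ennreal (real i) * indicator A x + u i x \<partial>M)"
      unfolding IW_def
    proof (intro nn_integral_mono)
      fix x
      show "indicator A x * ennreal (w x powr q) \<le> ennreal (real i) * indicator A x + u i x"
      proof (cases "x \<in> A")
        case True
        then have "x \<in> B" using AB by auto
        have "ennreal (w x powr q) \<le> ennreal (real i + max (w x powr q - real i) 0)"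
          by (intro ennreal_leI) auto
        also have "\<dots> = ennreal (real i) + ennreal (max (w x powr q - real i) 0)"
          by (intro ennreal_plus) auto
        finally show ?thesis using True \<open>x \<in> B\<close> by (simp add: u_def)
      qed simp
    qed
    also have "\<dots> = ennreal (real i) * emeasure M A + (\<integral>\<^sup>+x. u i x \<partial>M)"
      by (subst nn_integral_add) (auto simp: nn_integral_cmult_indicator)
    also have "\<dots> < ennreal (e/2) + ennreal (e/2)"
    proof -
      have "ennreal (real i) * emeasure M A \<le> ennreal (real i) * ennreal \<delta>"
        using Am by (intro mult_left_mono) auto
      also have "\<dots> = ennreal (real i * \<delta>)" using dpos by (simp add: ennreal_mult)
      also have "\<dots> \<le> ennreal (e/2)" using idle by (intro ennreal_leI)
      finally have a: "ennreal (real i) * emeasure M A \<le> ennreal (e/2)" .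
      have "ennreal (real i) * emeasure M A + (\<integral>\<^sup>+x. u i x \<partial>M) \<le> ennreal (e/2) + (\<integral>\<^sup>+x. u i x \<partial>M)"
        using a by (rule add_right_mono)
      also have "\<dots> < ennreal (e/2) + ennreal (e/2)"
        using i by (simp add: ennreal_add_left_cancel_less)
      finally show ?thesis .
    qed
    also have "\<dots> = ennreal e" using e by (simp flip: ennreal_plus)
    finally show "IW A < ennreal e" .
  qed
qed

lemma c_bound:
  assumes f[measurable]: "f \<in> borel_measurable M" and fA: "Lp_int \<rho> p M f \<le> ennreal A" and A: "A \<ge> 0"
    and S[measurable]: "S \<in> sets M" and SB: "S \<subseteq> ball z s"
  shows "norm (LINT y:S|M. f y) \<le> dd * (enn2real (IW (ball z s)) + A)"
proof -
  have IWS: "IW S < \<infinity>" using IW_mono[OF SB] IW_ball_fin[of z s] by (meson le_less_trans)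
  have fin: "Lp_int \<rho> p M f < \<infinity>" using fA by (simp add: le_less_trans)
  have "ennreal (norm (LINT y:S|M. f y)) \<le> (\<integral>\<^sup>+x. indicator S x * ennreal (norm (f x)) \<partial>M)"
    by (rule set_int_norm[OF loc_int[OF f fin IWS S]])
  also have "\<dots> \<le> (\<integral>\<^sup>+x. indicator (ball z s) x * ennreal (norm (f x)) \<partial>M)"
    using SB by (intro nn_integral_mono) (auto split: split_indicator)
  also have "\<dots> \<le> ennreal dd * (ennreal (1 powr (-q)) * IW (ball z s) + ennreal (1 powr p) * Lp_int \<rho> p M f)"
    by (rule int_bound) auto
  also have "\<dots> = ennreal dd * (IW (ball z s) + Lp_int \<rho> p M f)" by simp
  also have "\<dots> \<le> ennreal dd * (ennreal (enn2real (IW (ball z s))) + ennreal A)"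
    using IW_ball_fin[of z s] fA by (intro mult_left_mono add_mono) (auto simp: less_top)
  also have "\<dots> = ennreal (dd * (enn2real (IW (ball z s)) + A))"
    using dd_pos A by (simp add: ennreal_mult ennreal_plus)
  finally show ?thesis using dd_pos A by (subst (asm) ennreal_le_iff) auto
qed

lemma avg_bound:
  assumes f[measurable]: "f \<in> borel_measurable M" and fA: "Lp_int \<rho> p M f \<le> ennreal A" and A: "A \<ge> 0"
    and r: "r > 0"
  shows "norm (avg_op M r f z) \<le> dd * (enn2real (IW (ball z r)) + A) / measure M (ball z r)"
proof -
  have "norm (LINT y:ball z r|M. f y) \<le> dd * (enn2real (IW (ball z r)) + A)"
    by (rule c_bound[OF f fA A]) auto
  then show ?thesis using m_pos[OF r, of z]
    by (simp add: avg_op_def divide_simps mult.commute)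
qed

lemma equicont:
  assumes G: "\<And>f. f \<in> G \<Longrightarrow> f \<in> borel_measurable M \<and> Lp_int \<rho> p M f \<le> ennreal A"
    and A: "A \<ge> 0" and r: "r > 0" and eta: "\<eta> > 0"
  shows "\<exists>s>0. \<forall>y f. dist y x < s \<longrightarrow> f \<in> G \<longrightarrow> dist (avg_op M r f y) (avg_op M r f x) < \<eta>"
proof -
  define B1 where "B1 = ball x (r+1)"
  define m where "m y = measure M (ball y r)" for y
  have m0: "m x > 0" using m_pos[OF r] by (simp add: m_def)
  define Cb where "Cb = dd * (enn2real (IW B1) + A)"
  have Cb0: "Cb \<ge> 0" using dd_pos A by (simp add: Cb_def)
  have sub1: "ball y r \<subseteq> B1" if "dist y x < 1" for y
  proof
    fix z assume "z \<in> ball y r"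
    then have "dist z y < r" by (simp add: dist_commute)
    moreover have "dist z x \<le> dist z y + dist y x" by (rule dist_triangle)
    ultimately show "z \<in> B1" using that unfolding B1_def by (simp add: dist_commute)
  qed
  have cbound: "norm (LINT z:ball y r|M. f z) \<le> Cb" if "dist y x < 1" "f \<in> G" for y f
    using c_bound[of f A "ball y r" x "r+1"] G[OF that(2)] A sub1[OF that(1)]
    unfolding Cb_def B1_def by auto
  define t where "t = (\<eta> * m x / (4 * (dd * A + 1))) powr (1/p)"
  have tp: "t powr p = \<eta> * m x / (4 * (dd * A + 1))"
  proof -
    have "0 \<le> dd * A" using dd_pos A by simp
    then have X: "0 < \<eta> * m x / (4 * (dd * A + 1))" using eta m0 by simp
    have "t powr p = (\<eta> * m x / (4 * (dd * A + 1))) powr ((1/p) * p)"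
      unfolding t_def by (rule powr_powr)
    also have "(1/p) * p = 1" using p by simp
    finally show ?thesis using X by (simp only: powr_one_gt_zero_iff)
  qed
  have dA: "0 \<le> dd * A" using dd_pos A by simp
  have t0: "t > 0" using eta m0 dA unfolding t_def by (simp add: add_nonneg_pos)
  have tA: "dd * (t powr p * A) \<le> \<eta> * m x / 4"
  proof -
    have "dd * (t powr p * A) = (\<eta> * m x / 4) * (dd * A / (dd * A + 1))"
      unfolding tp using dd_pos A by (simp add: field_simps)
    also have "\<dots> \<le> (\<eta> * m x / 4) * 1"
      using eta m0 dA by (intro mult_left_mono) auto
    finally show ?thesis by simp
  qed
  define e where "e = \<eta> * m x / (4 * dd * t powr (-q))"
  have e0: "e > 0" using eta m0 dd_pos t0 by (simp add: e_def)
  have te: "dd * (t powr (-q) * e) = \<eta> * m x / 4"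
    using dd_pos t0 by (simp add: e_def field_simps)
  have B1m: "B1 \<in> sets M" unfolding B1_def by auto
  obtain \<delta>1 where d1: "\<delta>1 > 0" and AC1: "\<And>D. D \<in> sets M \<Longrightarrow> D \<subseteq> B1 \<Longrightarrow> emeasure M D < ennreal \<delta>1 \<Longrightarrow> IW D < ennreal e"
    using AC[OF B1m _ e0] IW_ball_fin unfolding B1_def by blast
  have ev1: "\<forall>\<^sub>F y in at x. measure M ((ball x r - ball y r) \<union> (ball y r - ball x r)) < \<delta>1"
    using order_tendstoD(2)[OF mu_cont[OF r] d1] .
  have ev2: "\<forall>\<^sub>F y in at x. dist y x < 1"
    using eventually_at_ball'[of 1 x UNIV] by (auto elim!: eventually_mono simp: dist_commute)
  have "((\<lambda>y. 1 / m y) \<longlongrightarrow> 1 / m x) (at x)"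
    using m0 m_cont[OF r, of x] unfolding m_def by (intro tendsto_divide tendsto_const) auto
  then have ev3: "\<forall>\<^sub>F y in at x. dist (1 / m y) (1 / m x) < \<eta> / (2 * (Cb + 1))"
    using Cb0 eta by (intro tendstoD) auto
  have "\<forall>\<^sub>F y in at x. measure M ((ball x r - ball y r) \<union> (ball y r - ball x r)) < \<delta>1 \<and> dist y x < 1 \<and> dist (1 / m y) (1 / m x) < \<eta> / (2 * (Cb + 1))"
    using ev1 ev2 ev3 by eventually_elim auto
  then obtain s where s0: "s > 0" and sP: "\<And>y. y \<noteq> x \<Longrightarrow> dist y x < s \<Longrightarrow>
      measure M ((ball x r - ball y r) \<union> (ball y r - ball x r)) < \<delta>1 \<and> dist y x < 1 \<and> dist (1 / m y) (1 / m x) < \<eta> / (2 * (Cb + 1))"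
    unfolding eventually_at by auto
  show ?thesis
  proof (intro exI[of _ s] conjI s0 allI impI)
    fix y f assume ys: "dist y x < s" and fG: "f \<in> G"
    show "dist (avg_op M r f y) (avg_op M r f x) < \<eta>"
    proof (cases "y = x")
      case True then show ?thesis using eta by simp
    next
      case False
      note yP = sP[OF False ys]
      have f[measurable]: "f \<in> borel_measurable M" and fA: "Lp_int \<rho> p M f \<le> ennreal A" using G[OF fG] by auto
      have fin: "Lp_int \<rho> p M f < \<infinity>" using fA by (simp add: le_less_trans)
      let ?D = "(ball x r - ball y r) \<union> (ball y r - ball x r)"
      have Dm[measurable]: "?D \<in> sets M" by (auto simp: borel)
      have DB: "?D \<subseteq> B1" using sub1[of y] sub1[of x] yP by auto
      have Df: "?D \<in> fmeasurable M" using DB unfolding B1_def by (intro fmeas) (auto intro: bounded_subset[OF bounded_ball])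
      have "emeasure M ?D < ennreal \<delta>1"
        using yP Df by (simp add: emeasure_eq_ennreal_measure fmeasurableD2 ennreal_less_iff)
      then have IWD: "IW ?D < ennreal e" using AC1[OF Dm DB] by simp
      define cx where "cx = (LINT z:ball x r|M. f z)"
      define cy where "cy = (LINT z:ball y r|M. f z)"
      have "ennreal (norm (cx - cy)) \<le> (\<integral>\<^sup>+z. indicator ?D z * ennreal (norm (f z)) \<partial>M)"
        unfolding cx_def cy_def
        by (intro set_int_diff_norm loc_int[OF f fin] IW_ball_fin) auto
      also have "\<dots> \<le> ennreal dd * (ennreal (t powr (-q)) * IW ?D + ennreal (t powr p) * Lp_int \<rho> p M f)"
        by (rule int_bound[OF f Dm t0])
      also have "\<dots> \<le> ennreal dd * (ennreal (t powr (-q)) * ennreal e + ennreal (t powr p) * ennreal A)"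
        using IWD fA by (intro mult_left_mono add_mono) auto
      also have "\<dots> = ennreal (dd * (t powr (-q) * e + t powr p * A))"
        using dd_pos e0 A by (simp add: ennreal_mult ennreal_plus)
      finally have "norm (cx - cy) \<le> dd * (t powr (-q) * e + t powr p * A)"
        using dd_pos e0 A by (subst (asm) ennreal_le_iff) auto
      also have "\<dots> \<le> \<eta> * m x / 2" using te tA by (simp add: distrib_left)
      finally have n1: "norm (cy - cx) \<le> \<eta> * m x / 2" by (simp add: norm_minus_commute)
      have n2: "norm cy \<le> Cb" unfolding cy_def using cbound yP fG by auto
      have eq: "avg_op M r f y - avg_op M r f x = (1 / m x) *\<^sub>R (cy - cx) + (1 / m y - 1 / m x) *\<^sub>R cy"
        unfolding avg_op_def cx_def cy_def m_def by (simp add: algebra_simps)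
      have "dist (avg_op M r f y) (avg_op M r f x) \<le> (1 / m x) * norm (cy - cx) + \<bar>1 / m y - 1 / m x\<bar> * norm cy"
        unfolding dist_norm eq using m0
        by (metis (no_types, lifting) abs_of_pos norm_scaleR norm_triangle_ineq zero_less_divide_1_iff)
      also have "\<dots> < \<eta> / 2 + \<eta> / 2"
      proof (rule add_le_less_mono)
        show "(1 / m x) * norm (cy - cx) \<le> \<eta> / 2" using n1 m0 by (simp add: field_simps)
        have "\<bar>1 / m y - 1 / m x\<bar> * norm cy \<le> \<bar>1 / m y - 1 / m x\<bar> * Cb"
          using n2 by (intro mult_left_mono) auto
        also have "\<dots> \<le> (\<eta> / (2 * (Cb + 1))) * Cb"
          using yP Cb0 by (intro mult_right_mono) (auto simp: dist_real_def)
        also have "\<dots> < \<eta> / 2"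
          using Cb0 eta by (simp add: field_simps)
        finally show "\<bar>1 / m y - 1 / m x\<bar> * norm cy < \<eta> / 2" .
      qed
      finally show ?thesis by simp
    qed
  qed
qed

lemma avg_meas:
  assumes f[measurable]: "f \<in> borel_measurable M" and fin: "Lp_int \<rho> p M f < \<infinity>" and r: "r > 0"
  shows "avg_op M r f \<in> borel_measurable M"
proof -
  have fA: "Lp_int \<rho> p M f \<le> ennreal (enn2real (Lp_int \<rho> p M f))" using fin by (simp add: less_top)
  have "continuous (at x) (avg_op M r f)" for x
    unfolding continuous_at_eps_delta
  proof (intro allI impI)
    fix \<eta> :: real assume "\<eta> > 0"
    from equicont[of "{f}" "enn2real (Lp_int \<rho> p M f)" r \<eta> x] this fA r
    show "\<exists>\<delta>>0. \<forall>x'. dist x' x < \<delta> \<longrightarrow> dist (avg_op M r f x') (avg_op M r f x) < \<eta>" by auto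
  qed
  then have "continuous_on UNIV (avg_op M r f)" by (simp add: continuous_at_imp_continuous_on)
  then show ?thesis unfolding meas_eq by (rule borel_measurable_continuous_onI)
qed

end

lemma fd1:
  fixes \<psi> :: "'f \<Rightarrow> 'e::euclidean_space"
  assumes bd: "bounded (\<psi> ` G)" and eta: "\<eta> > 0"
  shows "\<exists>K. finite K \<and> K \<subseteq> G \<and> (\<forall>f\<in>G. \<exists>g\<in>K. dist (\<psi> f) (\<psi> g) < \<eta>)"
proof -
  have cpt: "compact (closure (\<psi> ` G))" using bd by (simp add: compact_closure)
  have cover: "closure (\<psi> ` G) \<subseteq> (\<Union>g\<in>G. ball (\<psi> g) \<eta>)"
  proof
    fix z assume z: "z \<in> closure (\<psi> ` G)"
    have "\<forall>\<epsilon>>0. \<exists>y\<in>G. dist (\<psi> y) z < \<epsilon>" using z closure_approachable[of z "\<psi> ` G"] by simp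
    then obtain g where g: "g \<in> G" "dist (\<psi> g) z < \<eta>" using eta by blast
    then have "z \<in> ball (\<psi> g) \<eta>" by simp
    then show "z \<in> (\<Union>g\<in>G. ball (\<psi> g) \<eta>)" using g(1) by blast
  qed
  have "\<exists>K. K \<subseteq> G \<and> finite K \<and> closure (\<psi> ` G) \<subseteq> (\<Union>g\<in>K. ball (\<psi> g) \<eta>)"
  proof (rule compactE_image[OF cpt _ cover])
    show "\<And>g. g \<in> G \<Longrightarrow> open (ball (\<psi> g) \<eta>)" by simp
  next
    fix C' assume "C' \<subseteq> G" "finite C'" "closure (\<psi> ` G) \<subseteq> (\<Union>g\<in>C'. ball (\<psi> g) \<eta>)"
    then show "\<exists>K. K \<subseteq> G \<and> finite K \<and> closure (\<psi> ` G) \<subseteq> (\<Union>g\<in>K. ball (\<psi> g) \<eta>)" by blast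
  qed
  then obtain K where K: "K \<subseteq> G" "finite K" "closure (\<psi> ` G) \<subseteq> (\<Union>g\<in>K. ball (\<psi> g) \<eta>)"
    by blast
  have "\<forall>f\<in>G. \<exists>g\<in>K. dist (\<psi> f) (\<psi> g) < \<eta>"
  proof
    fix f assume "f \<in> G"
    then have "\<psi> f \<in> closure (\<psi> ` G)" by (rule subsetD[OF closure_subset imageI])
    then have "\<psi> f \<in> (\<Union>g\<in>K. ball (\<psi> g) \<eta>)" by (rule subsetD[OF K(3)])
    then obtain g where g: "g \<in> K" "\<psi> f \<in> ball (\<psi> g) \<eta>" by blast
    then have "dist (\<psi> g) (\<psi> f) < \<eta>" by simp
    then have "dist (\<psi> f) (\<psi> g) < \<eta>" by (subst dist_commute)
    then show "\<exists>g\<in>K. dist (\<psi> f) (\<psi> g) < \<eta>" using g(1) by blast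
  qed
  then show ?thesis using K(1,2) by (intro exI[of _ K]) simp
qed

lemma fd:
  fixes \<phi> :: "'x \<Rightarrow> 'f \<Rightarrow> 'e::euclidean_space"
  assumes "finite P" "\<forall>x\<in>P. bounded (\<phi> x ` G)"
  shows "\<forall>\<eta>>0. \<exists>K. finite K \<and> K \<subseteq> G \<and> (\<forall>f\<in>G. \<exists>g\<in>K. \<forall>x\<in>P. dist (\<phi> x f) (\<phi> x g) < \<eta>)"
  using assms
proof (induction P rule: finite_induct)
  case empty
  show ?case
  proof (intro allI impI)
    fix \<eta> :: real assume "\<eta> > 0"
    have "bounded ((\<lambda>_. 0::'e) ` G)" by (rule bounded_subset[of "{0}"]) auto
    from fd1[OF this \<open>\<eta> > 0\<close>] show "\<exists>K. finite K \<and> K \<subseteq> G \<and> (\<forall>f\<in>G. \<exists>g\<in>K. \<forall>x\<in>{}. dist (\<phi> x f) (\<phi> x g) < \<eta>)"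
      by auto
  qed
next
  case (insert z P)
  show ?case
  proof (intro allI impI)
    fix \<eta> :: real assume eta: "\<eta> > 0"
    have bP: "\<forall>x\<in>P. bounded (\<phi> x ` G)" using insert.prems by simp
    have e2: "\<eta>/2 > 0" using eta by simp
    have "\<exists>K. finite K \<and> K \<subseteq> G \<and> (\<forall>f\<in>G. \<exists>g\<in>K. \<forall>x\<in>P. dist (\<phi> x f) (\<phi> x g) < \<eta>/2)"
      using insert.IH[OF bP] e2 by blast
    then obtain K0 where K0: "finite K0" "K0 \<subseteq> G" "\<And>f. f \<in> G \<Longrightarrow> \<exists>g\<in>K0. \<forall>x\<in>P. dist (\<phi> x f) (\<phi> x g) < \<eta>/2"
      by blast
    define Gg where "Gg g = {f\<in>G. \<forall>x\<in>P. dist (\<phi> x f) (\<phi> x g) < \<eta>/2}" for g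
    have ex: "\<forall>g\<in>K0. \<exists>T. finite T \<and> T \<subseteq> Gg g \<and> (\<forall>f\<in>Gg g. \<exists>h\<in>T. dist (\<phi> z f) (\<phi> z h) < \<eta>)"
    proof
      fix g assume "g \<in> K0"
      have bz: "bounded (\<phi> z ` G)" using insert.prems by simp
      have "bounded (\<phi> z ` Gg g)"
        by (rule bounded_subset[OF bz]) (auto simp: Gg_def)
      from fd1[OF this eta] show "\<exists>T. finite T \<and> T \<subseteq> Gg g \<and> (\<forall>f\<in>Gg g. \<exists>h\<in>T. dist (\<phi> z f) (\<phi> z h) < \<eta>)" .
    qed
    from bchoice[OF ex] obtain T where T0: "\<forall>g\<in>K0. finite (T g) \<and> T g \<subseteq> Gg g \<and> (\<forall>f\<in>Gg g. \<exists>h\<in>T g. dist (\<phi> z f) (\<phi> z h) < \<eta>)"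
      by blast
    then have T: "\<And>g. g \<in> K0 \<Longrightarrow> finite (T g) \<and> T g \<subseteq> Gg g \<and> (\<forall>f\<in>Gg g. \<exists>h\<in>T g. dist (\<phi> z f) (\<phi> z h) < \<eta>)"
      by blast
    show "\<exists>K. finite K \<and> K \<subseteq> G \<and> (\<forall>f\<in>G. \<exists>g\<in>K. \<forall>x\<in>insert z P. dist (\<phi> x f) (\<phi> x g) < \<eta>)"
    proof (intro exI[of _ "\<Union>(T ` K0)"] conjI ballI)
      show "finite (\<Union>(T ` K0))"
      proof (rule finite_UN_I[OF K0(1)])
        fix g assume "g \<in> K0" then show "finite (T g)" using T by blast
      qed
      show "\<Union>(T ` K0) \<subseteq> G"
      proof
        fix h assume "h \<in> \<Union>(T ` K0)"
        then obtain g where "g \<in> K0" "h \<in> T g" by blast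
        then have "h \<in> Gg g" using T by blast
        then show "h \<in> G" by (simp add: Gg_def)
      qed
    next
      fix f assume f: "f \<in> G"
      obtain g where g: "g \<in> K0" "\<forall>x\<in>P. dist (\<phi> x f) (\<phi> x g) < \<eta>/2" using K0(3)[OF f] by blast
      then have "f \<in> Gg g" using f by (simp add: Gg_def)
      then obtain h where h: "h \<in> T g" "dist (\<phi> z f) (\<phi> z h) < \<eta>" using T[OF g(1)] by blast
      have hG: "h \<in> Gg g" using T[OF g(1)] h(1) by blast
      show "\<exists>g\<in>\<Union>(T ` K0). \<forall>x\<in>insert z P. dist (\<phi> x f) (\<phi> x g) < \<eta>"
      proof (intro bexI[of _ h] ballI)
        fix x assume "x \<in> insert z P"
        then show "dist (\<phi> x f) (\<phi> x h) < \<eta>"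
        proof
          assume "x = z" then show ?thesis using h by simp
        next
          assume x: "x \<in> P"
          have "dist (\<phi> x h) (\<phi> x g) < \<eta>/2" using hG x by (simp add: Gg_def)
          moreover have "dist (\<phi> x f) (\<phi> x g) < \<eta>/2" using g(2) x by blast
          ultimately show ?thesis using dist_triangle_half_l[of "\<phi> x f" "\<phi> x g" \<eta> "\<phi> x h"] by simp
        qed
      next
        show "h \<in> \<Union>(T ` K0)" using g(1) h(1) by blast
      qed
    qed
  qed
qed

lemma Lpn_lt:
  assumes "Lp_norm \<rho> p M h < ennreal c" "p > 0"
  shows "Lp_int \<rho> p M h < ennreal (c powr p)"
proof -
  have fin: "Lp_int \<rho> p M h \<noteq> \<infinity>" using assms(1) by (auto simp: Lp_norm_def)
  define X where "X = enn2real (Lp_int \<rho> p M h)"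
  have X0: "X \<ge> 0" by (simp add: X_def)
  have eq: "Lp_int \<rho> p M h = ennreal X" using fin by (simp add: X_def less_top)
  have "ennreal (X powr (1/p)) < ennreal c" using assms(1) fin by (simp add: Lp_norm_def X_def)
  then have lt: "X powr (1/p) < c" by (simp add: ennreal_less_iff)
  have "X = (X powr (1/p)) powr p" using X0 assms(2) by (simp add: powr_powr)
  also have "\<dots> < c powr p" using lt assms(2) by (intro powr_less_mono2) auto
  finally show ?thesis unfolding eq using X0 by (intro ennreal_lessI) auto
qed

lemma Lpi_lt:
  assumes "Lp_int \<rho> p M h < ennreal (e powr p)" "p > 0" "e > 0"
  shows "Lp_norm \<rho> p M h < ennreal e"
proof -
  have fin: "Lp_int \<rho> p M h \<noteq> \<infinity>" using assms(1) by auto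
  define X where "X = enn2real (Lp_int \<rho> p M h)"
  have X0: "X \<ge> 0" by (simp add: X_def)
  have eq: "Lp_int \<rho> p M h = ennreal X" using fin by (simp add: X_def less_top)
  have "ennreal X < ennreal (e powr p)" using assms(1) unfolding eq .
  then have "X < e powr p" using ennreal_less_iff[OF X0] by simp
  then have "X powr (1/p) < (e powr p) powr (1/p)" using X0 assms(2) by (intro powr_less_mono2) auto
  also have "\<dots> = e" using assms by (simp add: powr_powr)
  finally show ?thesis using fin assms(3) by (simp add: Lp_norm_def X_def[symmetric] ennreal_lessI)
qed

lemma pow3:
  fixes u v t p :: real
  assumes "u \<ge> 0" "v \<ge> 0" "t \<ge> 0" "p > 0"
  shows "(u + v + t) powr p \<le> 3 powr p * (u powr p + v powr p + t powr p)"
proof -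
  define m where "m = max u (max v t)"
  have "(u + v + t) powr p \<le> (3 * m) powr p"
    using assms by (intro powr_mono2) (auto simp: m_def)
  also have "\<dots> = 3 powr p * m powr p" using assms by (simp add: powr_mult m_def)
  also have "m powr p \<le> u powr p + v powr p + t powr p"
  proof -
    have "m = u \<or> m = v \<or> m = t" unfolding m_def by linarith
    moreover have "0 \<le> u powr p" "0 \<le> v powr p" "0 \<le> t powr p" by auto
    ultimately show ?thesis by auto
  qed
  finally show ?thesis by simp
qed

theorem theorem4p5:
  fixes M :: "'a::metric_space measure"
    and \<rho> :: "'a \<Rightarrow> complex^'n \<Rightarrow> real"
    and W :: "'a \<Rightarrow> complex^'n^'n"
    and p :: real
    and F :: "('a \<Rightarrow> complex^'n) set"
  assumes borel: "sets M = sets borel"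
    and open_pos: "\<And>U. open U \<Longrightarrow> U \<noteq> {} \<Longrightarrow> emeasure M U > 0"
    and bdd_fin: "\<And>S. bounded S \<Longrightarrow> emeasure M S < \<infinity>"
    and proper: "\<And>S::'a set. closed S \<Longrightarrow> bounded S \<Longrightarrow> compact S"
    and mu_cont: "\<And>x r. r > 0 \<Longrightarrow>
        ((\<lambda>y. measure M ((ball x r - ball y r) \<union> (ball y r - ball x r))) \<longlongrightarrow> 0) (at x)"
    and p: "1 < p"
    and norms: "\<And>x. is_cnorm (\<rho> x)"
    and W_pd: "\<And>x. self_adjoint (W x) \<and> pos_def (W x)"
    and W_equiv: "\<And>x v. \<rho> x v \<le> norm (W x *v v) \<and> norm (W x *v v) \<le> sqrt (real CARD('n)) * \<rho> x v"
    and W_weight: "invertible_matrix_weight M W"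
    and W_p: "loc_integrable M (\<lambda>x. (opnorm (W x)) powr p)"
    and W_inv_p': "loc_integrable M (\<lambda>x. (opnorm (matrix_inv (W x))) powr (p / (p - 1)))"
    and rho_meas: "\<And>f. f \<in> borel_measurable M \<Longrightarrow> (\<lambda>x. \<rho> x (f x)) \<in> borel_measurable M"
    and F_sub: "F \<subseteq> Lp_space \<rho> p M"
    and cond_a: "(SUP f\<in>F. Lp_norm \<rho> p M f) < \<infinity>"
    and cond_b: "\<exists>x0. ((\<lambda>R. SUP f\<in>F. Lp_norm \<rho> p M (\<lambda>x. indicator (UNIV - ball x0 R) x *\<^sub>R f x))
                        \<longlongrightarrow> 0) at_top"
    and cond_c: "((\<lambda>r. SUP f\<in>F. Lp_norm \<rho> p M (\<lambda>x. avg_op M r f x - f x)) \<longlongrightarrow> 0) (at_right 0)"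
  shows "Lp_totally_bounded \<rho> p M F"
proof -
  interpret K: KR M \<rho> W p
    using borel open_pos bdd_fin mu_cont p norms W_equiv W_inv_p' rho_meas by (simp add: KR_def)
  have p0: "p > 0" using p by simp
  have Fm: "\<And>f. f \<in> F \<Longrightarrow> f \<in> borel_measurable M \<and> Lp_int \<rho> p M f < \<infinity>"
    using F_sub by (auto simp: Lp_space_def)
  define S where "S = (SUP f\<in>F. Lp_norm \<rho> p M f)"
  define A where "A = (enn2real S + 1) powr p"
  have A0: "A \<ge> 0" by (simp add: A_def)
  have FA: "\<And>f. f \<in> F \<Longrightarrow> f \<in> borel_measurable M \<and> Lp_int \<rho> p M f \<le> ennreal A"
  proof -
    fix f assume f: "f \<in> F"
    have "Lp_norm \<rho> p M f \<le> S" unfolding S_def using f by (rule SUP_upper)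
    also have "S < ennreal (enn2real S + 1)"
      using cond_a unfolding S_def[symmetric]
      by (cases S) (auto simp: ennreal_lessI)
    finally have "Lp_int \<rho> p M f < ennreal A" unfolding A_def by (rule Lpn_lt[OF _ p0])
    then show "f \<in> borel_measurable M \<and> Lp_int \<rho> p M f \<le> ennreal A" using Fm[OF f] by simp
  qed
  show ?thesis
    unfolding Lp_totally_bounded_def
  proof (intro allI impI)
    fix \<epsilon> :: real assume eps: "\<epsilon> > 0"
    define c where "c = 3 powr p"
    have c0: "c > 0" by (simp add: c_def)
    define \<eta> where "\<eta> = \<epsilon> powr p / (5 * c + 1)"
    have eta0: "\<eta> > 0" using eps c0 by (simp add: \<eta>_def)
    have eta5: "5 * c * \<eta> < \<epsilon> powr p"
      using eps c0 by (simp add: \<eta>_def field_simps)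
    define \<eta>' where "\<eta>' = \<eta> powr (1/p)"
    have eta'0: "\<eta>' > 0" using eta0 by (simp add: \<eta>'_def)
    have eta'p: "\<eta>' powr p = \<eta>" using eta0 p0 by (simp add: \<eta>'_def powr_powr)
    obtain x0 where x0: "((\<lambda>R. SUP f\<in>F. Lp_norm \<rho> p M (\<lambda>x. indicator (UNIV - ball x0 R) x *\<^sub>R f x)) \<longlongrightarrow> 0) at_top"
      using cond_b by blast
    have "eventually (\<lambda>R. (SUP f\<in>F. Lp_norm \<rho> p M (\<lambda>x. indicator (UNIV - ball x0 R) x *\<^sub>R f x)) < ennreal \<eta>') at_top"
      using eta'0 by (intro order_tendstoD(2)[OF x0]) simp
    then obtain R where R: "(SUP f\<in>F. Lp_norm \<rho> p M (\<lambda>x. indicator (UNIV - ball x0 R) x *\<^sub>R f x)) < ennreal \<eta>'"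
      unfolding eventually_at_top_linorder by blast
    have tail: "\<And>f. f \<in> F \<Longrightarrow> Lp_int \<rho> p M (\<lambda>x. indicator (UNIV - ball x0 R) x *\<^sub>R f x) < ennreal \<eta>"
    proof -
      fix f assume f: "f \<in> F"
      have "Lp_norm \<rho> p M (\<lambda>x. indicator (UNIV - ball x0 R) x *\<^sub>R f x) < ennreal \<eta>'"
        by (rule le_less_trans[OF SUP_upper[OF f] R])
      from Lpn_lt[OF this p0] show "Lp_int \<rho> p M (\<lambda>x. indicator (UNIV - ball x0 R) x *\<^sub>R f x) < ennreal \<eta>"
        using eta'p by simp
    qed
    have "eventually (\<lambda>r. (SUP f\<in>F. Lp_norm \<rho> p M (\<lambda>x. avg_op M r f x - f x)) < ennreal \<eta>') (at_right 0)"
      using eta'0 by (intro order_tendstoD(2)[OF cond_c]) simp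
    moreover have "eventually (\<lambda>r::real. r > 0) (at_right 0)" by (rule eventually_at_right_less)
    ultimately have "eventually (\<lambda>r. r > 0 \<and> (SUP f\<in>F. Lp_norm \<rho> p M (\<lambda>x. avg_op M r f x - f x)) < ennreal \<eta>') (at_right (0::real))"
      by eventually_elim auto
    then obtain r where r0: "r > 0" and rS: "(SUP f\<in>F. Lp_norm \<rho> p M (\<lambda>x. avg_op M r f x - f x)) < ennreal \<eta>'"
      using eventually_happens[of _ "at_right (0::real)"] by auto
    have smooth: "\<And>f. f \<in> F \<Longrightarrow> Lp_int \<rho> p M (\<lambda>x. avg_op M r f x - f x) < ennreal \<eta>"
    proof -
      fix f assume f: "f \<in> F"
      have "Lp_norm \<rho> p M (\<lambda>x. avg_op M r f x - f x) < ennreal \<eta>'"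
        by (rule le_less_trans[OF SUP_upper[OF f] rS])
      from Lpn_lt[OF this p0] show "Lp_int \<rho> p M (\<lambda>x. avg_op M r f x - f x) < ennreal \<eta>"
        using eta'p by simp
    qed
    define CW where "CW = (\<integral>\<^sup>+x. indicator (ball x0 R) x * ennreal (opnorm (W x) powr p) \<partial>M)"
    have Wpm[measurable]: "(\<lambda>x. opnorm (W x) powr p) \<in> borel_measurable M"
      using W_p by (simp add: loc_integrable_def)
    have CWfin: "CW < \<infinity>"
    proof -
      have "set_integrable M (ball x0 R) (\<lambda>x. opnorm (W x) powr p)"
        using W_p by (simp add: loc_integrable_def)
      then have "(\<integral>\<^sup>+x. ennreal (norm (indicator (ball x0 R) x *\<^sub>R opnorm (W x) powr p)) \<partial>M) < \<infinity>"
        unfolding set_integrable_def integrable_iff_bounded by simp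
      moreover have "(\<integral>\<^sup>+x. ennreal (norm (indicator (ball x0 R) x *\<^sub>R opnorm (W x) powr p)) \<partial>M) = CW"
        unfolding CW_def by (intro nn_integral_cong) (simp add: indicator_mult_ennreal split: split_indicator)
      ultimately show ?thesis by simp
    qed
    define Cw where "Cw = enn2real CW"
    have Cw0: "Cw \<ge> 0" by (simp add: Cw_def)
    have CWeq: "CW = ennreal Cw" using CWfin by (simp add: Cw_def less_top)
    define \<delta> where "\<delta> = (\<eta> / (Cw + 1)) powr (1/p)"
    have d0: "\<delta> > 0" using eta0 Cw0 by (simp add: \<delta>_def add_nonneg_pos)
    have dp: "\<delta> powr p = \<eta> / (Cw + 1)"
    proof -
      have X: "\<eta> / (Cw + 1) > 0" using eta0 Cw0 by (simp add: add_nonneg_pos)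
      have "\<delta> powr p = (\<eta> / (Cw + 1)) powr ((1/p) * p)" unfolding \<delta>_def by (rule powr_powr)
      also have "(1/p) * p = 1" using p0 by simp
      finally show ?thesis using X by (simp only: powr_one_gt_zero_iff)
    qed
    have dCw: "\<delta> powr p * Cw \<le> \<eta>"
      unfolding dp using eta0 Cw0 by (simp add: field_simps)
    have "\<forall>x. \<exists>s>0. \<forall>y f. dist y x < s \<longrightarrow> f \<in> F \<longrightarrow> dist (avg_op M r f y) (avg_op M r f x) < \<delta>/3"
    proof
      fix x
      show "\<exists>s>0. \<forall>y f. dist y x < s \<longrightarrow> f \<in> F \<longrightarrow> dist (avg_op M r f y) (avg_op M r f x) < \<delta>/3"
        by (rule K.equicont[of F A r "\<delta>/3" x]) (use FA A0 r0 d0 in auto)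
    qed
    then obtain s where s0: "\<And>x. s x > 0"
      and s: "\<And>x y f. dist y x < s x \<Longrightarrow> f \<in> F \<Longrightarrow> dist (avg_op M r f y) (avg_op M r f x) < \<delta>/3"
      by metis
    have cpt: "compact (cball x0 R)" by (rule proper) auto
    have "\<exists>P. P \<subseteq> cball x0 R \<and> finite P \<and> cball x0 R \<subseteq> (\<Union>x\<in>P. ball x (s x))"
    proof (rule compactE_image[OF cpt])
      show "\<And>x. x \<in> cball x0 R \<Longrightarrow> open (ball x (s x))" by simp
      show "cball x0 R \<subseteq> (\<Union>x\<in>cball x0 R. ball x (s x))"
      proof
        fix x assume "x \<in> cball x0 R"
        moreover have "x \<in> ball x (s x)" using s0[of x] by simp
        ultimately show "x \<in> (\<Union>x\<in>cball x0 R. ball x (s x))" by blast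
      qed
    next
      fix C' assume "C' \<subseteq> cball x0 R" "finite C'" "cball x0 R \<subseteq> (\<Union>x\<in>C'. ball x (s x))"
      then show "\<exists>P. P \<subseteq> cball x0 R \<and> finite P \<and> cball x0 R \<subseteq> (\<Union>x\<in>P. ball x (s x))" by blast
    qed
    then obtain P where P: "finite P" "cball x0 R \<subseteq> (\<Union>x\<in>P. ball x (s x))" by blast
    have bdP: "\<forall>x\<in>P. bounded ((\<lambda>f. avg_op M r f x) ` F)"
    proof
      fix x assume "x \<in> P"
      have "\<forall>v\<in>(\<lambda>f. avg_op M r f x) ` F. norm v \<le> K.dd * (enn2real (K.IW (ball x r)) + A) / measure M (ball x r)"
        using K.avg_bound FA A0 r0 by blast
      then show "bounded ((\<lambda>f. avg_op M r f x) ` F)" unfolding bounded_iff by blast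
    qed
    have "\<exists>Kf. finite Kf \<and> Kf \<subseteq> F \<and> (\<forall>f\<in>F. \<exists>g\<in>Kf. \<forall>x\<in>P. dist (avg_op M r f x) (avg_op M r g x) < \<delta>/3)"
    proof -
      have "\<delta>/3 > 0" using d0 by simp
      then show ?thesis using fd[OF P(1) bdP] by blast
    qed
    then obtain Kf where Kf: "finite Kf" "Kf \<subseteq> F"
      and Kfc: "\<And>f. f \<in> F \<Longrightarrow> \<exists>g\<in>Kf. \<forall>x\<in>P. dist (avg_op M r f x) (avg_op M r g x) < \<delta>/3"
      by blast
    show "\<exists>K. finite K \<and> K \<subseteq> F \<and> (\<forall>f\<in>F. \<exists>g\<in>K. Lp_norm \<rho> p M (\<lambda>x. f x - g x) < ennreal \<epsilon>)"
    proof (intro exI[of _ Kf] conjI ballI Kf)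
      fix f assume fF: "f \<in> F"
      obtain g where gK: "g \<in> Kf" and gc: "\<forall>x\<in>P. dist (avg_op M r f x) (avg_op M r g x) < \<delta>/3"
        using Kfc[OF fF] by blast
      have gF: "g \<in> F" using gK Kf(2) by blast
      have close: "norm (avg_op M r f y - avg_op M r g y) \<le> \<delta>" if y: "y \<in> ball x0 R" for y
      proof -
        have "y \<in> cball x0 R" using y by simp
        then obtain x where x: "x \<in> P" "y \<in> ball x (s x)" using P(2) by blast
        have dyx: "dist y x < s x" using x(2) by (simp add: dist_commute)
        have "dist (avg_op M r f y) (avg_op M r f x) < \<delta>/3" by (rule s[OF dyx fF])
        moreover have "dist (avg_op M r g y) (avg_op M r g x) < \<delta>/3" by (rule s[OF dyx gF])
        moreover have "dist (avg_op M r f x) (avg_op M r g x) < \<delta>/3" using gc x(1) by blast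
        moreover have "dist (avg_op M r f y) (avg_op M r g y) \<le> dist (avg_op M r f y) (avg_op M r f x) + dist (avg_op M r f x) (avg_op M r g y)"
          by (rule dist_triangle)
        moreover have "dist (avg_op M r f x) (avg_op M r g y) \<le> dist (avg_op M r f x) (avg_op M r g x) + dist (avg_op M r g x) (avg_op M r g y)"
          by (rule dist_triangle)
        moreover have "dist (avg_op M r g x) (avg_op M r g y) = dist (avg_op M r g y) (avg_op M r g x)"
          by (rule dist_commute)
        ultimately have "dist (avg_op M r f y) (avg_op M r g y) < \<delta>" by linarith
        then show ?thesis by (simp add: dist_norm)
      qed
      have fm[measurable]: "f \<in> borel_measurable M" and gm[measurable]: "g \<in> borel_measurable M"
        using FA fF gF by auto
      have Sfm[measurable]: "avg_op M r f \<in> borel_measurable M"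
        using K.avg_meas Fm[OF fF] r0 by blast
      have Sgm[measurable]: "avg_op M r g \<in> borel_measurable M"
        using K.avg_meas Fm[OF gF] r0 by blast
      define a1 where "a1 x = \<rho> x (indicator (UNIV - ball x0 R) x *\<^sub>R f x) powr p" for x
      define a2 where "a2 x = \<rho> x (indicator (UNIV - ball x0 R) x *\<^sub>R g x) powr p" for x
      define a3 where "a3 x = \<rho> x (avg_op M r f x - f x) powr p" for x
      define a4 where "a4 x = \<rho> x (avg_op M r g x - g x) powr p" for x
      define a5 where "a5 x = indicator (ball x0 R) x * opnorm (W x) powr p" for x
      have a_nn: "a1 x \<ge> 0" "a2 x \<ge> 0" "a3 x \<ge> 0" "a4 x \<ge> 0" "a5 x \<ge> 0" for x
        by (auto simp: a1_def a2_def a3_def a4_def a5_def)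
      have pt: "\<rho> x (f x - g x) powr p \<le> c * (a1 x + a2 x + a3 x + a4 x + \<delta> powr p * a5 x)" for x
      proof (cases "x \<in> ball x0 R")
        case False
        have e1: "a1 x = \<rho> x (f x) powr p" "a2 x = \<rho> x (g x) powr p"
          using False by (auto simp: a1_def a2_def)
        have "\<rho> x (f x - g x) \<le> \<rho> x (f x) + \<rho> x (g x) + 0" using K.rho_diff by simp
        then have "\<rho> x (f x - g x) powr p \<le> (\<rho> x (f x) + \<rho> x (g x) + 0) powr p"
          using p0 K.rho_nonneg by (intro powr_mono2) auto
        also have "\<dots> \<le> c * (\<rho> x (f x) powr p + \<rho> x (g x) powr p + 0 powr p)"
          unfolding c_def using K.rho_nonneg p0 by (intro pow3) auto
        also have "\<dots> \<le> c * (a1 x + a2 x + a3 x + a4 x + \<delta> powr p * a5 x)"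
          using c0 a_nn[of x] unfolding e1 by (intro mult_left_mono) auto
        finally show ?thesis .
      next
        case True
        have e5: "a5 x = opnorm (W x) powr p" using True by (simp add: a5_def)
        let ?Sf = "avg_op M r f x" and ?Sg = "avg_op M r g x"
        have "f x - g x = ((?Sf - ?Sg) - (?Sf - f x)) + (?Sg - g x)" by (simp add: algebra_simps)
        then have "\<rho> x (f x - g x) = \<rho> x (((?Sf - ?Sg) - (?Sf - f x)) + (?Sg - g x))" by simp
        also have "\<dots> \<le> \<rho> x ((?Sf - ?Sg) - (?Sf - f x)) + \<rho> x (?Sg - g x)" by (rule K.rho_add)
        also have "\<dots> \<le> \<rho> x (?Sf - f x) + \<rho> x (?Sf - ?Sg) + \<rho> x (?Sg - g x)"
          using K.rho_diff[of x "?Sf - ?Sg" "?Sf - f x"] by simp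
        also have "\<dots> \<le> \<rho> x (?Sf - f x) + opnorm (W x) * \<delta> + \<rho> x (?Sg - g x)"
        proof -
          have "\<rho> x (?Sf - ?Sg) \<le> opnorm (W x) * norm (?Sf - ?Sg)" by (rule K.rho_le_W)
          also have "\<dots> \<le> opnorm (W x) * \<delta>" using close[OF True] K.opnorm_nonneg by (intro mult_left_mono) auto
          finally show ?thesis by simp
        qed
        finally have le: "\<rho> x (f x - g x) \<le> \<rho> x (?Sf - f x) + opnorm (W x) * \<delta> + \<rho> x (?Sg - g x)" .
        have "\<rho> x (f x - g x) powr p \<le> (\<rho> x (?Sf - f x) + opnorm (W x) * \<delta> + \<rho> x (?Sg - g x)) powr p"
          using p0 K.rho_nonneg le by (intro powr_mono2) auto
        also have "\<dots> \<le> c * (\<rho> x (?Sf - f x) powr p + (opnorm (W x) * \<delta>) powr p + \<rho> x (?Sg - g x) powr p)"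
          unfolding c_def using K.rho_nonneg p0 K.opnorm_nonneg[of "W x"] d0 by (intro pow3) auto
        also have "(opnorm (W x) * \<delta>) powr p = \<delta> powr p * a5 x"
          unfolding e5 using K.opnorm_nonneg d0 by (simp add: powr_mult mult.commute)
        also have "c * (\<rho> x (?Sf - f x) powr p + \<delta> powr p * a5 x + \<rho> x (?Sg - g x) powr p) \<le> c * (a1 x + a2 x + a3 x + a4 x + \<delta> powr p * a5 x)"
          using c0 a_nn[of x] by (intro mult_left_mono) (auto simp: a3_def a4_def)
        finally show ?thesis .
      qed
      have outm: "UNIV - ball x0 R \<in> sets M" by (simp add: borel)
      have m1[measurable]: "(\<lambda>x. ennreal (a1 x)) \<in> borel_measurable M" unfolding a1_def
        by (rule K.meas_rho_p, rule borel_measurable_scaleR[OF borel_measurable_indicator[OF outm] fm])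
      have m2[measurable]: "(\<lambda>x. ennreal (a2 x)) \<in> borel_measurable M" unfolding a2_def
        by (rule K.meas_rho_p, rule borel_measurable_scaleR[OF borel_measurable_indicator[OF outm] gm])
      have m3[measurable]: "(\<lambda>x. ennreal (a3 x)) \<in> borel_measurable M" unfolding a3_def by (rule K.meas_rho_p, rule borel_measurable_diff[OF Sfm fm])
      have m4[measurable]: "(\<lambda>x. ennreal (a4 x)) \<in> borel_measurable M" unfolding a4_def by (rule K.meas_rho_p, rule borel_measurable_diff[OF Sgm gm])
      have m5[measurable]: "(\<lambda>x. ennreal (a5 x)) \<in> borel_measurable M" unfolding a5_def
      proof -
        have "ball x0 R \<in> sets M" by (simp add: borel)
        then have "(\<lambda>x. indicator (ball x0 R) x * opnorm (W x) powr p) \<in> borel_measurable M"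
          by (intro borel_measurable_times borel_measurable_indicator Wpm)
        then show "(\<lambda>x. ennreal (indicator (ball x0 R) x * opnorm (W x) powr p)) \<in> borel_measurable M"
          by simp
      qed
      have "Lp_int \<rho> p M (\<lambda>x. f x - g x) \<le> (\<integral>\<^sup>+x. ennreal c * (ennreal (a1 x) + ennreal (a2 x) + ennreal (a3 x) + ennreal (a4 x) + ennreal (\<delta> powr p) * ennreal (a5 x)) \<partial>M)"
        unfolding Lp_int_def
      proof (intro nn_integral_mono)
        fix x
        have "ennreal (\<rho> x (f x - g x) powr p) \<le> ennreal (c * (a1 x + a2 x + a3 x + a4 x + \<delta> powr p * a5 x))"
          by (intro ennreal_leI pt)
        also have "\<dots> = ennreal c * (ennreal (a1 x) + ennreal (a2 x) + ennreal (a3 x) + ennreal (a4 x) + ennreal (\<delta> powr p) * ennreal (a5 x))"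
          using a_nn[of x] c0 by (simp add: ennreal_mult ennreal_plus)
        finally show "ennreal (\<rho> x (f x - g x) powr p) \<le> ennreal c * (ennreal (a1 x) + ennreal (a2 x) + ennreal (a3 x) + ennreal (a4 x) + ennreal (\<delta> powr p) * ennreal (a5 x))" .
      qed
      also have "\<dots> = ennreal c * ((\<integral>\<^sup>+x. ennreal (a1 x) \<partial>M) + (\<integral>\<^sup>+x. ennreal (a2 x) \<partial>M) + (\<integral>\<^sup>+x. ennreal (a3 x) \<partial>M) + (\<integral>\<^sup>+x. ennreal (a4 x) \<partial>M) + ennreal (\<delta> powr p) * (\<integral>\<^sup>+x. ennreal (a5 x) \<partial>M))"
        by (simp add: nn_integral_cmult nn_integral_add)
      also have "\<dots> \<le> ennreal c * (ennreal \<eta> + ennreal \<eta> + ennreal \<eta> + ennreal \<eta> + ennreal (\<delta> powr p) * ennreal Cw)"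
      proof -
        have i1: "(\<integral>\<^sup>+x. ennreal (a1 x) \<partial>M) \<le> ennreal \<eta>" using tail[OF fF] by (simp add: a1_def Lp_int_def)
        have i2: "(\<integral>\<^sup>+x. ennreal (a2 x) \<partial>M) \<le> ennreal \<eta>" using tail[OF gF] by (simp add: a2_def Lp_int_def)
        have i3: "(\<integral>\<^sup>+x. ennreal (a3 x) \<partial>M) \<le> ennreal \<eta>" using smooth[OF fF] by (simp add: a3_def Lp_int_def)
        have i4: "(\<integral>\<^sup>+x. ennreal (a4 x) \<partial>M) \<le> ennreal \<eta>" using smooth[OF gF] by (simp add: a4_def Lp_int_def)
        have i5: "(\<integral>\<^sup>+x. ennreal (a5 x) \<partial>M) = ennreal Cw"
          unfolding CWeq[symmetric] CW_def a5_def
          by (intro nn_integral_cong) (simp add: indicator_mult_ennreal)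
        show ?thesis using i1 i2 i3 i4 i5 by (intro mult_left_mono add_mono) auto
      qed
      also have "\<dots> = ennreal (c * (4 * \<eta> + \<delta> powr p * Cw))"
      proof -
        have four: "x + x + x + x = 4 * x" for x :: ennreal
        proof -
          have "(4::ennreal) = 1 + 1 + 1 + 1" by simp
          then show ?thesis by (simp only: distrib_right mult_1)
        qed
        show ?thesis using c0 eta0 Cw0 by (simp add: four ennreal_mult ennreal_plus)
      qed
      also have "\<dots> \<le> ennreal (5 * c * \<eta>)"
        using dCw c0 by (intro ennreal_leI) (simp add: algebra_simps)
      also have "\<dots> < ennreal (\<epsilon> powr p)"
        using eta5 eps by (intro ennreal_lessI) auto
      finally have "Lp_norm \<rho> p M (\<lambda>x. f x - g x) < ennreal \<epsilon>"
        by (rule Lpi_lt[OF _ p0 eps])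
      then show "\<exists>g\<in>Kf. Lp_norm \<rho> p M (\<lambda>x. f x - g x) < ennreal \<epsilon>" using gK by blast
    qed
  qed
qed

end
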